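(* For each integer $l\ge1$, the sequence $X(l)=(a_j)_{j\ge1}$ with $a_j=\nu_2(A_{l,l+j-1})$ is $s$-simple with $s=2^{1+\nu_2(l)}$.
   Context: $A_{l,m}=\frac{l!\,m!}{2^{m-l}}\sum_{k=l}^{m}2^{k}\binom{2m-2k}{m-k}\binom{m+k}{k}\binom{k}{l}$ for $0\le l\le m$; $\nu_2$ is the $2$-adic valuation. A sequence $(a_j)_{j\ge1}$ has block structure with block length $s\ge2$ if for every $t\ge0$, $a_{st+1}=a_{st+2}=\cdots=a_{s(t+1)}$; it is called $s$-simple if $s$ is the largest block length for which this holds. *)

theory Defs
  imports Main "HOL-Computational_Algebra.Computational_Algebra"
begin

text \<open>A_{l,m} as a rational number (the paper's formula, division by 2^(m-l) exact in Q).\<close>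
definition A :: "nat \<Rightarrow> nat \<Rightarrow> rat" where
  "A l m = of_nat (fact l * fact m) / 2 ^ (m - l) *
     (\<Sum>k=l..m. 2 ^ k * of_nat ((2*m - 2*k) choose (m - k)) * of_nat ((m + k) choose k)
                  * of_nat (k choose l))"

definition nu2 :: "rat \<Rightarrow> int" where
  "nu2 x = (case quotient_of x of (p, q) \<Rightarrow>
              int (multiplicity (2::int) p) - int (multiplicity (2::int) q))"

definition block_structure :: "(nat \<Rightarrow> 'a) \<Rightarrow> nat \<Rightarrow> bool" where
  "block_structure a s \<longleftrightarrow> s \<ge> 2 \<and>
     (\<forall>t. \<forall>i \<in> {s*t+1..s*(t+1)}. a i = a (s*t+1))"

definition simple_seq :: "(nat \<Rightarrow> 'a) \<Rightarrow> nat \<Rightarrow> bool" where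
  "simple_seq a s \<longleftrightarrow> block_structure a s \<and> (\<forall>s'. block_structure a s' \<longrightarrow> s' \<le> s)"

end

theory Submission
  imports Defs
begin

definition Od :: "nat \<Rightarrow> nat" where "Od i = (\<Prod>t<i. 2*t+1)"

lemma Od_odd: "odd (Od i)"
  by (induction i) (auto simp: Od_def)

lemma fact2: "fact (2*i) = (2::nat)^i * fact i * Od i"
proof (induction i)
  case 0 then show ?case by (simp add: Od_def)
next
  case (Suc i)
  have "fact (2*Suc i) = (2*i+2) * ((2*i+1) * (fact (2*i)::nat))"
    by (simp add: fact_Suc)
  also have "\<dots> = 2^Suc i * fact (Suc i) * Od (Suc i)"
    using Suc by (simp add: Od_def fact_Suc algebra_simps)
  finally show ?case .
qed

lemma binom_central: "((2*i) choose i) * fact i = (2::nat)^i * Od i"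
proof -
  have "fact i * fact (2*i - i) * ((2*i) choose i) = (fact (2*i)::nat)"
    by (rule binomial_fact_lemma) simp
  then have "fact i * (((2*i) choose i) * fact i) = fact i * ((2::nat)^i * Od i)"
    using fact2[of i] by (simp add: mult_2 algebra_simps)
  then show ?thesis by (simp del: mult_2)
qed

lemma term_id:
  assumes "j \<le> n" "m = n + l"
  shows "fact l * fact m * 2^(l+j) * ((2*m - 2*(l+j)) choose (m - (l+j))) * ((m + (l+j)) choose (l+j))
          * ((l+j) choose l) * fact n
       = (2::nat)^m * Od (n-j) * (n choose j) * fact (m + (l+j))"
proof -
  define k where "k = l + j"
  define i where "i = n - j"
  have e1: "2*m - 2*k = 2*i" "m - k = i" using assms by (auto simp: k_def i_def)
  have X: "((m+k) choose k) * fact k * fact m = (fact (m+k) :: nat)"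
    using binomial_fact_lemma[of k "m+k"] by (simp add: algebra_simps)
  have Y: "(k choose l) * fact l * fact j = (fact k :: nat)"
    using binomial_fact_lemma[of l k] by (simp add: k_def algebra_simps)
  have Z: "(n choose j) * fact j * fact i = (fact n :: nat)"
    using binomial_fact_lemma[of j n] assms by (simp add: i_def algebra_simps)
  have B: "((2*i) choose i) * fact i = (2::nat)^i * Od i" by (rule binom_central)
  have p: "(2::nat)^k * 2^i = 2^m" using assms by (simp add: k_def i_def power_add[symmetric])
  have "(2::nat)^m * Od i * (n choose j) * fact (m + k)
      = 2^k * (2^i * Od i) * (n choose j) * fact (m + k)" using p by (simp add: algebra_simps)
  also have "\<dots> = 2^k * (((2*i) choose i) * fact i) * (n choose j) * (((m+k) choose k) * fact k * fact m)"
    using B X by simp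
  also have "\<dots> = 2^k * (((2*i) choose i) * fact i) * (n choose j) * (((m+k) choose k) * ((k choose l) * fact l * fact j) * fact m)"
    using Y by simp
  also have "\<dots> = fact l * fact m * 2^k * ((2*i) choose i) * ((m+k) choose k) * (k choose l) * ((n choose j) * fact j * fact i)"
    by (simp add: algebra_simps)
  also have "\<dots> = fact l * fact m * 2^k * ((2*i) choose i) * ((m+k) choose k) * (k choose l) * fact n"
    using Z by simp
  finally show ?thesis unfolding k_def[symmetric] i_def[symmetric] e1 by (rule sym)
qed


definition W :: "nat \<Rightarrow> nat \<Rightarrow> nat" where
  "W l m = (\<Sum>j=0..m-l. Od (m-l-j) * ((m-l) choose j) * ((m+l+j) choose j) * fact j)"

lemma W_odd: "odd (W l m)"
proof -
  define n where "n = m - l"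
  have ev: "even (Od (n-j) * (n choose j) * ((m+l+j) choose j) * fact j)" if j: "j \<in> {Suc 0..n}" for j
  proof (cases "j = 1")
    case True
    have "even (n * (m + l + 1))"
    proof (cases "even n")
      case False
      then have "m = n + l" unfolding n_def using j by auto
      with False show ?thesis by auto
    qed auto
    then show ?thesis using True by simp
  next
    case False
    then have "2 dvd (fact j :: nat)" using j by (intro dvd_fact) auto
    then show ?thesis by simp
  qed
  have "W l m = Od n + (\<Sum>j=Suc 0..n. Od (n-j) * (n choose j) * ((m+l+j) choose j) * fact j)"
    unfolding W_def n_def[symmetric] by (subst sum.atLeast_Suc_atMost) auto
  moreover have "even (\<Sum>j=Suc 0..n. Od (n-j) * (n choose j) * ((m+l+j) choose j) * fact j)"
    by (intro dvd_sum ev)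
  ultimately show ?thesis using Od_odd[of n] by simp
qed

lemma A_closed:
  assumes "l \<le> m"
  shows "A l m = of_nat (2^l * prod Suc {m-l..<m+l} * W l m)"
proof -
  define n where "n = m - l"
  have mn: "m = n + l" using assms n_def by simp
  define S where "S = (\<Sum>k=l..m. 2^k * ((2*m - 2*k) choose (m - k)) * ((m + k) choose k) * (k choose l))"
  have 1: "A l m = of_nat (fact l * fact m * S) / 2^n"
    unfolding A_def S_def n_def by (simp add: of_nat_sum algebra_simps)
  have "fact n * (fact l * fact m * S) = (\<Sum>k=l..m. fact l * fact m * 2^k * ((2*m - 2*k) choose (m - k)) * ((m + k) choose k) * (k choose l) * fact n)"
    unfolding S_def by (simp add: sum_distrib_left sum_distrib_right algebra_simps)
  also have "\<dots> = (\<Sum>j=0..n. fact l * fact m * 2^(l+j) * ((2*m - 2*(l+j)) choose (m - (l+j))) * ((m + (l+j)) choose (l+j)) * ((l+j) choose l) * fact n)"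
    using sum.shift_bounds_cl_nat_ivl[of "\<lambda>k. fact l * fact m * 2^k * ((2*m - 2*k) choose (m - k)) * ((m + k) choose k) * (k choose l) * fact n" 0 l n]
    by (simp add: mn add.commute)
  also have "\<dots> = (\<Sum>j=0..n. (2::nat)^m * Od (n-j) * (n choose j) * fact (m + (l+j)))"
    by (intro sum.cong refl term_id mn) auto
  also have "\<dots> = (\<Sum>j=0..n. (2::nat)^m * fact (m+l) * (Od (n-j) * (n choose j) * ((m+l+j) choose j) * fact j))"
  proof (intro sum.cong refl)
    fix j
    have "fact j * fact (m+l+j-j) * ((m+l+j) choose j) = (fact (m+l+j) :: nat)"
      by (rule binomial_fact_lemma) simp
    then have "fact (m + (l+j)) = fact (m+l) * (((m+l+j) choose j) * (fact j :: nat))"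
      by (simp add: algebra_simps)
    then show "(2::nat)^m * Od (n-j) * (n choose j) * fact (m + (l+j)) = 2^m * fact (m+l) * (Od (n-j) * (n choose j) * ((m+l+j) choose j) * fact j)"
      by (simp add: algebra_simps)
  qed
  also have "\<dots> = 2^m * fact (m+l) * W l m"
    unfolding W_def n_def by (simp add: sum_distrib_left)
  also have "fact (m+l) = prod Suc {m-l..<m+l} * (fact n :: nat)"
    using fact_split[of "2*l" "m+l", where 'a=nat] assms by (simp add: n_def mult_2)
  finally have "fact n * (fact l * fact m * S) = fact n * (2^n * (2^l * prod Suc {m-l..<m+l} * W l m))"
    by (simp add: mn power_add algebra_simps)
  then have "fact l * fact m * S = 2^n * (2^l * prod Suc {m-l..<m+l} * W l m)" by simp
  then show ?thesis unfolding 1 by simp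
qed


lemma mult_int_nat: "multiplicity (2::int) (int x) = multiplicity (2::nat) x"
proof (cases "x = 0")
  case True then show ?thesis by simp
next
  case False
  show ?thesis
  proof (rule multiplicity_eqI)
    have "(2::nat) ^ multiplicity 2 x dvd x" by (rule multiplicity_dvd)
    then show "(2::int) ^ multiplicity 2 x dvd int x"
      by (metis of_nat_dvd_iff of_nat_numeral of_nat_power)
    have "\<not> (2::nat) ^ Suc (multiplicity 2 x) dvd x"
      using multiplicity_geI[of x 2 "Suc (multiplicity 2 x)"] False by auto
    then show "\<not> (2::int) ^ Suc (multiplicity 2 x) dvd int x"
      by (metis of_nat_dvd_iff of_nat_numeral of_nat_power)
  qed
qed

lemma nu2_of_nat: "nu2 (of_nat x) = int (multiplicity (2::nat) x)"
  unfolding nu2_def by (simp add: mult_int_nat)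

definition G :: "nat \<Rightarrow> nat \<Rightarrow> nat" where "G l i = prod Suc {i-1..<2*l+i-1}"

lemma G_pos: "G l i > 0" unfolding G_def by (simp add: prod_pos)

lemma a_val:
  assumes "i \<ge> 1"
  shows "nu2 (A l (l+i-1)) = int l + int (multiplicity (2::nat) (G l i))"
proof -
  have iv: "{l+i-1-l..<l+i-1+l} = {i-1..<2*l+i-1}" using assms by auto
  have "A l (l+i-1) = of_nat (2^l * G l i * W l (l+i-1))"
    using A_closed[of l "l+i-1"] assms unfolding G_def iv by simp
  moreover have "multiplicity (2::nat) (2^l * G l i * W l (l+i-1)) = l + multiplicity 2 (G l i)"
  proof -
    have W0: "multiplicity (2::nat) (W l (l+i-1)) = 0"
      using W_odd by (intro not_dvd_imp_multiplicity_0) auto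
    have "multiplicity (2::nat) (2^l * G l i * W l (l+i-1)) = multiplicity 2 ((2::nat)^l) + multiplicity 2 (G l i) + multiplicity 2 (W l (l+i-1))"
      using G_pos[of l i] W_odd[of l "l+i-1"]
      by (simp add: prime_elem_multiplicity_mult_distrib prime_imp_prime_elem odd_pos)
    then show ?thesis using W0 by (simp add: prime_imp_prime_elem)
  qed
  ultimately show ?thesis by (simp only: nu2_of_nat)
qed

lemma G_step:
  assumes "i \<ge> 1"
  shows "G l (i+1) * i = G l i * (i + 2*l)"
proof -
  obtain p where p: "i = Suc p" using assms by (cases i) auto
  have "prod Suc {p..<Suc (p+2*l)} = Suc p * prod Suc {Suc p..<Suc (p+2*l)}"
    by (rule prod.atLeast_Suc_lessThan) simp
  moreover have "prod Suc {p..<Suc (p+2*l)} = prod Suc {p..<p+2*l} * Suc (p+2*l)"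
    by (rule prod.atLeastLessThan_Suc) simp
  ultimately show ?thesis unfolding G_def p by (simp add: algebra_simps)
qed

lemma v_step:
  assumes "i \<ge> 1"
  shows "multiplicity (2::nat) (G l (i+1)) + multiplicity 2 i = multiplicity 2 (G l i) + multiplicity 2 (i + 2*l)"
proof -
  have "multiplicity (2::nat) (G l (i+1) * i) = multiplicity (2::nat) (G l i * (i + 2*l))"
    using G_step[OF assms] by simp
  then show ?thesis using G_pos[of l i] G_pos[of l "i+1"] assms
    by (simp add: prime_elem_multiplicity_mult_distrib prime_imp_prime_elem)
qed

lemma vadd:
  fixes i d e :: nat
  assumes "\<not> 2^e dvd i" "2^e dvd d"
  shows "multiplicity 2 (i + d) = multiplicity 2 i"
proof -
  define a where "a = multiplicity (2::nat) i"
  have i0: "i \<noteq> 0"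
  proof
    assume "i = 0"
    with assms(1) show False by simp
  qed
  have ae: "a < e"
  proof (rule ccontr)
    assume "\<not> a < e"
    then have "2^e dvd i" unfolding a_def by (intro multiplicity_dvd') simp
    with assms show False by simp
  qed
  have d1: "2^a dvd i" unfolding a_def by (rule multiplicity_dvd)
  have d2: "\<not> 2^Suc a dvd i" unfolding a_def using multiplicity_geI[of i 2 "Suc (multiplicity 2 i)"] i0 by auto
  have d3: "2^Suc a dvd d" using ae assms(2) by (meson Suc_leI dvd_trans le_imp_power_dvd)
  have d4: "2^a dvd d" using ae assms(2) by (meson less_imp_le dvd_trans le_imp_power_dvd)
  show ?thesis unfolding a_def[symmetric]
  proof (rule multiplicity_eqI)
    show "2^a dvd i + d" using d1 d4 by simp
    show "\<not> 2^Suc a dvd i + d" using d2 d3 by (simp add: dvd_add_left_iff)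
  qed
qed


theorem mainTheorem11:
  fixes l :: nat
  assumes "l \<ge> 1"
  shows "simple_seq (\<lambda>j. nu2 (A l (l + j - 1))) (2 ^ (1 + multiplicity (2::nat) l))"
proof -
  define a where "a = (\<lambda>j. nu2 (A l (l + j - 1)))"
  define e where "e = 1 + multiplicity (2::nat) l"
  define s where "s = (2::nat) ^ e"
  have l0: "l \<noteq> 0" using assms by simp
  have s2: "s \<ge> 2" unfolding s_def e_def
    by (metis One_nat_def add_gr_0 less_numeral_extra(1) power_increasing_iff power_one_right
        Suc_leI le_add1 one_less_numeral_iff semiring_norm(76) self_le_power le_trans)
  have sdvd: "s dvd 2*l" unfolding s_def e_def
    using multiplicity_dvd[of "2::nat" l] by (simp add: mult_dvd_mono)
  have av: "a i = int l + int (multiplicity (2::nat) (G l i))" if "i \<ge> 1" for i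
    unfolding a_def using a_val[OF that] .
  have step: "a (i+1) = a i" if "i \<ge> 1" "\<not> s dvd i" for i
  proof -
    have "multiplicity (2::nat) (i + 2*l) = multiplicity 2 i"
      using vadd[of e i "2*l"] that sdvd unfolding s_def by blast
    then have "multiplicity (2::nat) (G l (i+1)) = multiplicity 2 (G l i)"
      using v_step[OF that(1), of l] by simp
    then show ?thesis using av[of i] av[of "i+1"] that by simp
  qed
  have blk: "block_structure a s"
    unfolding block_structure_def
  proof (intro conjI allI ballI)
    show "2 \<le> s" by (rule s2)
    fix t i assume i: "i \<in> {s*t+1..s*(t+1)}"
    have "\<forall>d. d < s \<longrightarrow> a (s*t+1+d) = a (s*t+1)"
    proof (intro allI)
      fix d show "d < s \<longrightarrow> a (s*t+1+d) = a (s*t+1)"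
      proof (induction d)
        case 0 then show ?case by simp
      next
        case (Suc d)
        show ?case
        proof
          assume ds: "Suc d < s"
          have nd: "\<not> s dvd (s*t+1+d)"
          proof
            assume "s dvd s*t+1+d"
            then have "s dvd 1 + d" by (metis add.assoc dvd_add_right_iff dvd_triv_left)
            then have "s \<le> 1 + d" by (rule dvd_imp_le) simp
            with ds show False by simp
          qed
          have "a (s*t+1+Suc d) = a (s*t+1+d)" using step[of "s*t+1+d"] nd by simp
          then show "a (s*t+1+Suc d) = a (s*t+1)" using Suc ds by simp
        qed
      qed
    qed
    moreover have "i = s*t+1+(i - (s*t+1))" "i - (s*t+1) < s" using i by auto
    ultimately show "a i = a (s*t+1)" by metis
  qed
  have maxs: "s' \<le> s" if bs: "block_structure a s'" for s'
  proof (rule ccontr)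
    assume "\<not> s' \<le> s"
    then have "a (s+1) = a 1" using bs unfolding block_structure_def
      by (metis One_nat_def atLeastAtMost_iff le_add2 mult_0_right mult_1_right add_0 not_le Suc_leI add.commute plus_1_eq_Suc)
    moreover have "a s = a 1" using blk s2 unfolding block_structure_def
      by (metis One_nat_def atLeastAtMost_iff le_refl mult_0_right mult_1_right add_0 Suc_leI le_trans one_le_numeral)
    ultimately have eq: "a (s+1) = a s" by simp
    have s1: "s \<ge> 1" using s2 by simp
    have "multiplicity (2::nat) (G l (s+1)) = multiplicity 2 (G l s)"
      using av[OF s1] av[of "s+1"] eq by simp
    then have "multiplicity (2::nat) (s + 2*l) = multiplicity 2 s"
      using v_step[OF s1, of l] by simp
    also have "multiplicity (2::nat) s = e" unfolding s_def by (simp add: prime_imp_prime_elem)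
    finally have m1: "multiplicity (2::nat) (s + 2*l) = e" .
    obtain u where u: "l = 2^multiplicity 2 l * u" using multiplicity_dvd[of "2::nat" l] by (auto elim: dvdE)
    have uodd: "odd u"
    proof
      assume "even u"
      then obtain b where b: "u = 2*b" by (auto elim: evenE)
      have "l = 2^Suc (multiplicity 2 l) * b" using u b by simp
      then have "2^Suc (multiplicity 2 l) dvd l" by (rule dvdI)
      then show False using multiplicity_geI[of l 2 "Suc (multiplicity 2 l)"] l0 by auto
    qed
    have e1: "s + 2*l = 2^e * (1 + u)" unfolding s_def e_def using u by (simp add: algebra_simps)
    have "even (1+u)" using uodd by simp
    then obtain c where c: "1 + u = 2*c" unfolding dvd_def by blast
    have "s + 2*l = 2^Suc e * c" using e1 c by (simp only: power_Suc mult.assoc)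
    then have "2^Suc e dvd s + 2*l" by (rule dvdI)
    then have "Suc e \<le> multiplicity (2::nat) (s + 2*l)"
      using multiplicity_geI[of "s+2*l" 2 "Suc e"] s2 by auto
    with m1 show False by simp
  qed
  show ?thesis unfolding simple_seq_def a_def[symmetric] e_def[symmetric] s_def[symmetric]
    using blk maxs by blast
qed

end
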